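(* In the linear–quadratic example, let $(p_i)_{i\ge0}\subset[0,1]$, $Q_n=\prod_{i=0}^n(1-p_i)$, and $p^*=1-\prod_{i=0}^\infty(1-p_i)$. Define the real sequence $(\bar X^n_T)_{n\ge0}$ by $\bar X^0_T=\bar X^{\rm MFC}_T$ and $$\bar X^{n+1}_T=Q_n\,\bar X^{\rm MFC}_T+(1-Q_n)\,\tilde{\bar X}^{n+1}_T,\qquad \tilde{\bar X}^{n+1}_T=e^{-T}x_0+\tfrac12q\,\bar X^n_T\big(1-e^{-2T}\big).$$ Then: (i) if $(\bar X^n_T)_n$ converges, its limit equals $(1-p^* )\bar X^{\rm MFC}_T+p^*\,\bar X^{p^*\text{-MFG}}_T$, i.e. the terminal mean of the whole population in the $p^*$-partial mean field equilibrium; (ii) if $\big|\tfrac q2(1-e^{-2T})\big|<1$, then $(\bar X^n_T)_n$ converges as $n\to\infty$.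
   Context: Linear–quadratic example: $d=1$, $T>0$, $x_0\in\mathbb R$, $q\in\mathbb R$, $B$ a one-dimensional Brownian motion. For a square-integrable progressively measurable real control $\boldsymbol\alpha$, the state is $dX_t=\alpha_tdt+dB_t$, $X_0=x_0$. For a flow $\boldsymbol\mu$ with time-$T$ mean $\bar\mu_T$, $J(\boldsymbol\alpha;\boldsymbol\mu)=\mathbb E[\int_0^T\frac12(X_t^2+\alpha_t^2)dt+\frac12(X_T-q\bar\mu_T)^2]$. $\bar X^{\rm MFC}_T=\frac{2x_0}{e^T(1+(1-q)^2)+e^{-T}(1-(1-q)^2)}$ is the terminal mean of the (unique) MFC optimal state (MFC: minimize $J(\boldsymbol\alpha;(\mathcal L(X^{\boldsymbol\alpha}_t))_t)$). The quantity $\tilde{\bar X}^{n+1}_T$ is the terminal mean of the best response to an environment of terminal mean $\bar X^n_T$. For $p\in[0,1]$, $\bar X^{p\text{-MFG}}_T=\frac{2x_0+q(1-p)\bar X^{\rm MFC}_T(e^T-e^{-T})}{e^T(2-qp)+e^{-T}qp}$ is the terminal mean of the deviating players in the $p$-partial mean field equilibrium (a pair $(\hat{\boldsymbol\alpha}^p,p\hat{\boldsymbol\mu}^p+(1-p)\boldsymbol\mu^{\rm MFC})$ with $\hat\mu^p_t=\mathcal L(X^{\hat{\boldsymbol\alpha}^p}_t)$ and $\hat{\boldsymbol\alpha}^p$ minimizing $J(\cdot;p\hat{\boldsymbol\mu}^p+(1-p)\boldsymbol\mu^{\rm MFC})$), assuming its denominator is nonzero. *)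

theory Defs
  imports Complex_Main
begin

definition XMFC :: "real \<Rightarrow> real \<Rightarrow> real \<Rightarrow> real" where
  "XMFC T x0 q = 2 * x0 / (exp T * (1 + (1 - q)^2) + exp (- T) * (1 - (1 - q)^2))"

definition pMFG_denom :: "real \<Rightarrow> real \<Rightarrow> real \<Rightarrow> real" where
  "pMFG_denom T q p = exp T * (2 - q * p) + exp (- T) * q * p"

text \<open>Terminal mean of the deviating players in the p-partial mean field equilibrium.\<close>
definition XpMFG :: "real \<Rightarrow> real \<Rightarrow> real \<Rightarrow> real \<Rightarrow> real" where
  "XpMFG T x0 q p = (2 * x0 + q * (1 - p) * XMFC T x0 q * (exp T - exp (- T))) / pMFG_denom T q p"

definition Qprod :: "(nat \<Rightarrow> real) \<Rightarrow> nat \<Rightarrow> real" where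
  "Qprod p n = (\<Prod>i\<le>n. 1 - p i)"

text \<open>Best-response terminal mean to an environment with terminal mean m.\<close>
definition Xtilde :: "real \<Rightarrow> real \<Rightarrow> real \<Rightarrow> real \<Rightarrow> real" where
  "Xtilde T x0 q m = exp (- T) * x0 + 1/2 * q * m * (1 - exp (- 2 * T))"

end

theory Submission
  imports Defs
begin

lemma contr_lemma:
  fixes d e :: "nat \<Rightarrow> real" and k :: real
  assumes k0: "0 \<le> k" and k1: "k < 1" and d0: "\<forall>n. 0 \<le> d n"
    and rec: "\<forall>n. d (Suc n) \<le> k * d n + e n" and e: "e \<longlonglongrightarrow> 0"
  shows "d \<longlonglongrightarrow> 0"
proof (rule LIMSEQ_I)
  fix r :: real assume r: "0 < r"
  have "0 < r * (1 - k) / 2" using r k1 by simp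
  then obtain N where N: "\<forall>n\<ge>N. norm (e n - 0) < r * (1 - k) / 2"
    using LIMSEQ_D[OF e] by blast
  have ind: "d (N + m) \<le> k ^ m * d N + r / 2" for m
  proof (induction m)
    case 0 then show ?case using r by simp
  next
    case (Suc m)
    have "e (N + m) \<le> r * (1 - k) / 2" using N[rule_format, of "N+m"] by auto
    then have "d (N + Suc m) \<le> k * d (N + m) + r * (1 - k) / 2"
      using rec[rule_format, of "N+m"] by simp
    also have "\<dots> \<le> k * (k ^ m * d N + r / 2) + r * (1 - k) / 2"
      using Suc k0 by (simp add: mult_left_mono)
    also have "\<dots> = k ^ Suc m * d N + r / 2" by (simp add: distrib_left right_diff_distrib diff_divide_distrib)
    finally show ?case .
  qed
  have "(\<lambda>m. k ^ m * d N) \<longlonglongrightarrow> 0 * d N"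
  proof (rule tendsto_mult[OF _ tendsto_const])
    show "(\<lambda>m. k ^ m) \<longlonglongrightarrow> 0" by (rule LIMSEQ_power_zero) (use k0 k1 in auto)
  qed
  then have "(\<lambda>m. k ^ m * d N) \<longlonglongrightarrow> 0" by simp
  then obtain M where M: "\<forall>m\<ge>M. norm (k ^ m * d N - 0) < r / 2"
    using LIMSEQ_D[of "\<lambda>m. k ^ m * d N" 0 "r/2"] r by auto
  show "\<exists>no. \<forall>n\<ge>no. norm (d n - 0) < r"
  proof (intro exI allI impI)
    fix n assume n: "N + M \<le> n"
    define m where "m = n - N"
    have m: "n = N + m" "M \<le> m" using n unfolding m_def by auto
    have "k ^ m * d N < r / 2" using M[rule_format, OF m(2)] by simp
    then show "norm (d n - 0) < r" using ind[of m] m d0 by auto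
  qed
qed

theorem mainTheorem16:
  fixes T x0 q :: real and p X :: "nat \<Rightarrow> real"
  assumes T: "T > 0"
    and p01: "\<forall>i. 0 \<le> p i \<and> p i \<le> 1"
    and X0: "X 0 = XMFC T x0 q"
    and XSuc: "\<forall>n. X (Suc n) = Qprod p n * XMFC T x0 q + (1 - Qprod p n) * Xtilde T x0 q (X n)"
  defines "pstar \<equiv> 1 - lim (Qprod p)"
  shows "(\<forall>L. X \<longlonglongrightarrow> L \<longrightarrow> pMFG_denom T q pstar \<noteq> 0 \<longrightarrow>
            L = (1 - pstar) * XMFC T x0 q + pstar * XpMFG T x0 q pstar)
         \<and> (\<bar>q / 2 * (1 - exp (- 2 * T))\<bar> < 1 \<longrightarrow> convergent X)"
proof -
  define M where "M = XMFC T x0 q"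
  define E where "E = exp T"
  have E0: "E > 0" unfolding E_def by simp
  have em: "exp (- T) = 1 / E" unfolding E_def by (simp add: exp_minus field_simps)
  have em2: "exp (- 2 * T) = 1 / E^2"
  proof -
    have "exp (- 2 * T) = exp (- T) * exp (- T)" by (simp flip: exp_add)
    then show ?thesis using em by (simp add: power2_eq_square)
  qed
  have Qnn: "Qprod p n \<ge> 0" for n unfolding Qprod_def using p01 by (intro prod_nonneg) auto
  have Qsuc: "Qprod p (Suc n) = Qprod p n * (1 - p (Suc n))" for n
    unfolding Qprod_def by simp
  have dec: "decseq (Qprod p)"
  proof (rule decseq_SucI)
    fix n
    have "Qprod p n * (1 - p (Suc n)) \<le> Qprod p n * 1"
      using Qnn[of n] p01 by (intro mult_left_mono) auto
    then show "Qprod p (Suc n) \<le> Qprod p n" using Qsuc by simp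
  qed
  obtain Q where Qlim: "Qprod p \<longlonglongrightarrow> Q" and QleX: "\<forall>i. Q \<le> Qprod p i"
    using decseq_convergent[OF dec, of 0] Qnn by blast
  have Q0: "Q \<ge> 0" using tendsto_lowerbound[OF Qlim] Qnn by (simp add: eventually_sequentially) 
  have Q1: "Q \<le> 1"
  proof -
    have "Qprod p 0 \<le> 1" unfolding Qprod_def using p01 by simp
    then show ?thesis using QleX by (meson order_trans)
  qed
  have ps: "pstar = 1 - Q" unfolding pstar_def using Qlim by (simp add: limI)
  define a where "a = x0 / E"
  define c where "c = q / 2 * (1 - 1 / E^2)"
  have Xt: "Xtilde T x0 q m = a + c * m" for m
    unfolding Xtilde_def a_def c_def em em2 by (simp add: algebra_simps)
  have rec: "X (Suc n) = Qprod p n * M + (1 - Qprod p n) * (a + c * X n)" for n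
    using XSuc Xt M_def by simp
  have part1: "\<forall>L. X \<longlonglongrightarrow> L \<longrightarrow> pMFG_denom T q pstar \<noteq> 0 \<longrightarrow>
            L = (1 - pstar) * XMFC T x0 q + pstar * XpMFG T x0 q pstar"
  proof (intro allI impI)
    fix L assume XL: "X \<longlonglongrightarrow> L" and D: "pMFG_denom T q pstar \<noteq> 0"
    have "(\<lambda>n. X (Suc n)) \<longlonglongrightarrow> L" using LIMSEQ_Suc[OF XL] .
    moreover have "(\<lambda>n. X (Suc n)) \<longlonglongrightarrow> Q * M + (1 - Q) * (a + c * L)"
      unfolding rec by (intro tendsto_intros Qlim XL)
    ultimately have eq: "L = Q * M + (1 - Q) * (a + c * L)" by (rule LIMSEQ_unique)
    have D': "E * (2 - q * (1 - Q)) + 1 / E * q * (1 - Q) \<noteq> 0"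
      using D unfolding pMFG_denom_def ps E_def[symmetric] em by simp
    define r where "r = 1 - Q"
    have Deq: "E * (2 - q * (1 - Q)) + 1 / E * q * (1 - Q) = 2 * E * (1 - r * c)"
      using E0 unfolding c_def r_def by (simp add: field_simps power2_eq_square)
    have nz: "1 - r * c \<noteq> 0" using D' Deq by auto
    have eq2: "L * (1 - r * c) = Q * M + r * a" using eq unfolding r_def by (simp add: algebra_simps)
    have Lv: "L = (Q * M + r * a) / (1 - r * c)" using eq2 nz by (simp add: field_simps)
    have "Q * M + r * ((2 * x0 + q * Q * M * (E - 1 / E)) / (2 * E * (1 - r * c)))
        = (Q * M * (2 * E * (1 - r * c)) + r * (2 * x0 + q * Q * M * (E - 1 / E))) / (2 * E * (1 - r * c))"
      using nz E0 by (simp add: field_simps)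
    also have "Q * M * (2 * E * (1 - r * c)) + r * (2 * x0 + q * Q * M * (E - 1 / E)) = 2 * E * (Q * M + r * a)"
      using E0 unfolding c_def a_def by (simp add: field_simps power2_eq_square)
    finally have "Q * M + r * ((2 * x0 + q * Q * M * (E - 1 / E)) / (2 * E * (1 - r * c))) = L"
      using Lv E0 nz by simp
    then show "L = (1 - pstar) * XMFC T x0 q + pstar * XpMFG T x0 q pstar"
      unfolding XpMFG_def pMFG_denom_def ps E_def[symmetric] em M_def[symmetric] Deq
      by (simp add: r_def)
  qed
  have part2: "\<bar>q / 2 * (1 - exp (- 2 * T))\<bar> < 1 \<longrightarrow> convergent X"
  proof
    assume "\<bar>q / 2 * (1 - exp (- 2 * T))\<bar> < 1"
    then have c1: "\<bar>c\<bar> < 1" unfolding c_def em2 .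
    have rc: "\<bar>(1 - Q) * c\<bar> < 1"
    proof -
      have "\<bar>(1 - Q) * c\<bar> = (1 - Q) * \<bar>c\<bar>" using Q0 Q1 by (simp add: abs_mult)
      also have "\<dots> \<le> \<bar>c\<bar>" using Q0 Q1 mult_right_mono[of "1 - Q" 1 "\<bar>c\<bar>"] by simp
      finally show ?thesis using c1 by simp
    qed
    then have nz: "1 - (1 - Q) * c \<noteq> 0" by auto
    define xs where "xs = (Q * M + (1 - Q) * a) / (1 - (1 - Q) * c)"
    have fix_eq: "xs = Q * M + (1 - Q) * (a + c * xs)"
      using nz unfolding xs_def by (simp add: field_simps)
    define e where "e n = \<bar>Qprod p n - Q\<bar> * (\<bar>M\<bar> + \<bar>a\<bar> + \<bar>c\<bar> * \<bar>xs\<bar>)" for n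
    have e0: "e \<longlonglongrightarrow> 0"
    proof -
      have "e \<longlonglongrightarrow> \<bar>Q - Q\<bar> * (\<bar>M\<bar> + \<bar>a\<bar> + \<bar>c\<bar> * \<bar>xs\<bar>)"
        unfolding e_def by (intro tendsto_intros Qlim)
      then show ?thesis by simp
    qed
    have Qle1: "Qprod p n \<le> 1" for n
      unfolding Qprod_def using p01 by (intro prod_le_1) auto
    define d where "d n = \<bar>X n - xs\<bar>" for n
    have drec: "\<forall>n. d (Suc n) \<le> \<bar>c\<bar> * d n + e n"
    proof
      fix n
      define Qn where "Qn = Qprod p n"
      have q0: "0 \<le> Qn" "Qn \<le> 1" using Qnn Qle1 Qn_def by auto
      have "X (Suc n) - xs = (Qn - Q) * M - (Qn - Q) * a - (Qn - Q) * c * xs + (1 - Qn) * c * (X n - xs)"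
      proof -
        have "X (Suc n) - xs = (Qn * M + (1 - Qn) * (a + c * X n)) - (Q * M + (1 - Q) * (a + c * xs))"
          using rec[of n] fix_eq unfolding Qn_def by linarith
        also have "\<dots> = (Qn - Q) * M - (Qn - Q) * a - (Qn - Q) * c * xs + (1 - Qn) * c * (X n - xs)"
          by (simp add: algebra_simps)
        finally show ?thesis .
      qed
      then have "\<bar>X (Suc n) - xs\<bar> \<le> \<bar>(Qn - Q) * M\<bar> + \<bar>(Qn - Q) * a\<bar> + \<bar>(Qn - Q) * c * xs\<bar> + \<bar>(1 - Qn) * c * (X n - xs)\<bar>"
        by linarith
      also have "\<dots> = e n + (1 - Qn) * (\<bar>c\<bar> * d n)"
      proof -
        have h1: "\<bar>1 - Qn\<bar> = 1 - Qn" using q0 by simp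
        show ?thesis unfolding e_def d_def Qn_def[symmetric]
          by (simp only: abs_mult h1) (simp add: algebra_simps)
      qed
      also have "\<dots> \<le> e n + 1 * (\<bar>c\<bar> * d n)"
        using q0 unfolding d_def by (intro add_left_mono mult_right_mono) auto
      finally show "d (Suc n) \<le> \<bar>c\<bar> * d n + e n" unfolding d_def by simp
    qed
    have "d \<longlonglongrightarrow> 0"
      by (rule contr_lemma[OF _ c1 _ drec e0]) (auto simp: d_def)
    then have "(\<lambda>n. X n - xs) \<longlonglongrightarrow> 0" unfolding d_def by (simp add: tendsto_rabs_zero_iff)
    then have "X \<longlonglongrightarrow> xs" by (simp add: LIM_zero_iff)
    then show "convergent X" by (auto simp: convergent_def)
  qed
  show ?thesis using part1 part2 by blast
qed

end
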